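(* Let $(M,g,J)$ be a Kaehler manifold. The following are equivalent: (a) $M$ is semisymmetric, i.e. $R\cdot R=0$; (b) $R\cdot R(u,v,v,u;x,Jx)=0$ for every $p\in M$ and all $x,u,v\in T_pM$; (c) $R\cdot R(u,Ju,Ju,u;x,y)=0$ for every $p\in M$ and all $x,y,u\in T_pM$; (d) $R\cdot R(u,Ju,Ju,u;x,Jx)=0$ for every $p\in M$ and all $x,u\in T_pM$.
   Context: A Kaehler manifold $(M,g,J)$: $J^2=-\mathrm{Id}$, $g(JX,JY)=g(X,Y)$, $\nabla J=0$ for the Levi-Civita connection. Curvature: $R(X,Y)Z=\nabla_X\nabla_YZ-\nabla_Y\nabla_XZ-\nabla_{[X,Y]}Z$, $R(X,Y,Z,W)=g(R(X,Y)Z,W)$. The $(0,6)$-tensor $R\cdot R$ is $R\cdot R(X_1,X_2,X_3,X_4;X,Y)=-R(R(X,Y)X_1,X_2,X_3,X_4)-R(X_1,R(X,Y)X_2,X_3,X_4)-R(X_1,X_2,R(X,Y)X_3,X_4)-R(X_1,X_2,X_3,R(X,Y)X_4)$. *)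

theory Defs
  imports "HOL-Analysis.Analysis"
begin

text \<open>Pointwise (algebraic) model of a Kaehler manifold at a point p:
  the tangent space T_pM is a finite-dimensional real inner product space 'a
  (metric g = inner), J is the complex structure on T_pM, and R is the
  curvature operator R(X,Y)Z at p.\<close>

definition hermitian_structure :: "('a::real_inner \<Rightarrow> 'a) \<Rightarrow> bool" where
  "hermitian_structure J \<longleftrightarrow> linear J \<and> (\<forall>x. J (J x) = - x)
     \<and> (\<forall>x y. inner (J x) (J y) = inner x y)"

text \<open>Curvature operator of a Kaehler manifold at a point: trilinear, skew in X Y,
  metric (R(X,Y,Z,W) = - R(X,Y,W,Z)), first Bianchi identity, and
  R(X,Y) J = J R(X,Y) (consequence of nabla J = 0).\<close>

definition kaehler_curvature ::
  "('a::real_inner \<Rightarrow> 'a) \<Rightarrow> ('a \<Rightarrow> 'a \<Rightarrow> 'a \<Rightarrow> 'a) \<Rightarrow> bool" where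
  "kaehler_curvature J R \<longleftrightarrow> hermitian_structure J
     \<and> (\<forall>y z. linear (\<lambda>x. R x y z)) \<and> (\<forall>x z. linear (\<lambda>y. R x y z))
     \<and> (\<forall>x y. linear (\<lambda>z. R x y z))
     \<and> (\<forall>x y z. R x y z = - R y x z)
     \<and> (\<forall>x y z w. inner (R x y z) w = - inner (R x y w) z)
     \<and> (\<forall>x y z. R x y z + R y z x + R z x y = 0)
     \<and> (\<forall>x y z. R x y (J z) = J (R x y z))"

definition R4 :: "('a::real_inner \<Rightarrow> 'a \<Rightarrow> 'a \<Rightarrow> 'a) \<Rightarrow> 'a \<Rightarrow> 'a \<Rightarrow> 'a \<Rightarrow> 'a \<Rightarrow> real" where
  "R4 R x y z w = inner (R x y z) w"

definition RR :: "('a::real_inner \<Rightarrow> 'a \<Rightarrow> 'a \<Rightarrow> 'a) \<Rightarrow> 'a \<Rightarrow> 'a \<Rightarrow> 'a \<Rightarrow> 'a \<Rightarrow> 'a \<Rightarrow> 'a \<Rightarrow> real" where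
  "RR R x1 x2 x3 x4 x y =
     - R4 R (R x y x1) x2 x3 x4 - R4 R x1 (R x y x2) x3 x4
     - R4 R x1 x2 (R x y x3) x4 - R4 R x1 x2 x3 (R x y x4)"

end

theory Submission
  imports Defs
begin

lemma pairsym_gen:
  fixes T :: "'a \<Rightarrow> 'a \<Rightarrow> 'a \<Rightarrow> 'a \<Rightarrow> real"
  assumes s1: "\<And>a b c d. T b a c d = - T a b c d"
    and s2: "\<And>a b c d. T a b d c = - T a b c d"
    and bi: "\<And>a b c d. T a b c d + T b c a d + T c a b d = 0"
  shows "T a b c d = T c d a b"
proof -
  have b1: "T a b c d + T b c a d + T c a b d = 0" by (rule bi)
  have b2: "T b c d a + T c d b a + T d b c a = 0" by (rule bi)
  have b3: "T c d a b + T d a c b + T a c d b = 0" by (rule bi)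
  have b4: "T d a b c + T a b d c + T b d a c = 0" by (rule bi)
  show ?thesis using b1 b2 b3 b4 s1[of a b] s1[of b c] s1[of c a] s1[of c d] s1[of d b] s1[of d a] s1[of a c] s1[of b d]
    s2[of b c a d] s2[of a b c d] s2[of c d b a] s2[of d b c a] s2[of d a c b] s2[of a c d b] s2[of a b d c] s2[of b d a c]
    s2[of c a b d] s2[of b c d a] s2[of c d a b] s2[of d a b c]
    s1[of b c d a] s1[of c d b a] s1[of d b c a] s1[of a c d b] s1[of d a c b] s1[of b d a c]
    s1[of a b d c] s1[of c a b d] s1[of b c a d] s1[of d c a b]
    by linarith
qed

lemma kc_zero:
  fixes T :: "'a::real_vector \<Rightarrow> 'a \<Rightarrow> 'a \<Rightarrow> 'a \<Rightarrow> real" and J :: "'a \<Rightarrow> 'a"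
  assumes a1: "\<And>a b c d e. T (a+b) c d e = T a c d e + T b c d e"
    and a2: "\<And>a b c d e. T c (a+b) d e = T c a d e + T c b d e"
    and a3: "\<And>a b c d e. T c d (a+b) e = T c d a e + T c d b e"
    and a4: "\<And>a b c d e. T c d e (a+b) = T c d e a + T c d e b"
    and n1: "\<And>a c d e. T (-a) c d e = - T a c d e"
    and n2: "\<And>a c d e. T c (-a) d e = - T c a d e"
    and n3: "\<And>a c d e. T c d (-a) e = - T c d a e"
    and n4: "\<And>a c d e. T c d e (-a) = - T c d e a"
    and Ja: "\<And>a b. J (a+b) = J a + J b"
    and Jn: "\<And>a. J (-a) = - J a"
    and JJ: "\<And>a. J (J a) = - a"
    and s1: "\<And>a b c d. T b a c d = - T a b c d"
    and s2: "\<And>a b c d. T a b d c = - T a b c d"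
    and bi: "\<And>a b c d. T a b c d + T b c a d + T c a b d = 0"
    and j34: "\<And>a b c d. T a b (J c) (J d) = T a b c d"
    and H: "\<And>u. T u (J u) (J u) u = 0"
  shows "T a b c d = 0"
proof -
  have ps: "\<And>a b c d. T a b c d = T c d a b"
    by (rule pairsym_gen[of T]) (fact s1 s2 bi)+
  have j12: "\<And>a b c d. T (J a) (J b) c d = T a b c d"
    using ps j34 by metis
  have Jd: "\<And>a b. J (a - b) = J a - J b" using Ja Jn by (metis diff_conv_add_uminus)
  have d1: "\<And>a b c d e. T (a-b) c d e = T a c d e - T b c d e" by (metis a1 n1 diff_conv_add_uminus)
  have d2: "\<And>a b c d e. T c (a-b) d e = T c a d e - T c b d e" by (metis a2 n2 diff_conv_add_uminus)
  have d3: "\<And>a b c d e. T c d (a-b) e = T c d a e - T c d b e" by (metis a3 n3 diff_conv_add_uminus)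
  have d4: "\<And>a b c d e. T c d e (a-b) = T c d e a - T c d e b" by (metis a4 n4 diff_conv_add_uminus)
  have key: "2 * T x y y x + 6 * T x (J y) (J y) x = 0" for x y
  proof -
    have h1: "T (x+y) (J (x+y)) (J (x+y)) (x+y) = 0" by (rule H)
    have h2: "T (x-y) (J (x-y)) (J (x-y)) (x-y) = 0" by (rule H)
    have hx: "T x (J x) (J x) x = 0" by (rule H)
    have hy: "T y (J y) (J y) y = 0" by (rule H)
    have S: "T x (J x) (J y) y + T x (J y) (J x) y + T x (J y) (J y) x + T y (J x) (J x) y
        + T y (J x) (J y) x + T y (J y) (J x) x = 0"
      using h1 h2 hx hy by (simp add: a1 a2 a3 a4 d1 d2 d3 d4 Ja Jd) 
    have f2: "T x (J y) (J x) y = T x (J y) (J y) x"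
      using j34[of x "J y" x "J y"] s2[of x "J y" x "J y"] by (simp add: JJ n4)
    have f4: "T y (J x) (J x) y = T x (J y) (J y) x"
      using j12[of y "J x" "J x" y] s1[of "J y" x "J x" y] f2 by (simp add: JJ n2)
    have f5: "T y (J x) (J y) x = T x (J y) (J y) x"
      using ps[of y "J x" "J y" x] s1[of "J y" x y "J x"] s2[of x "J y" y "J x"] f2 by simp
    have f6: "T y (J y) (J x) x = T x (J x) (J y) y"
      using ps[of y "J y" "J x" x] s1[of "J x" x y "J y"] s2[of x "J x" y "J y"] by simp
    have fA: "T x (J x) (J y) y = T x y y x + T x (J y) (J y) x"
      using bi[of x "J x" "J y" y] j12[of x y x y] s1[of x "J y" "J x" y] s2[of x y x y] f2 by simp
    show ?thesis using S f2 f4 f5 f6 fA by linarith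
  qed
  have F0: "T x y y x = 0" for x y
    using key[of x y] key[of x "J y"] by (simp add: JJ n2 n3)
  have G: "T x y z x = 0" for x y z
  proof -
    have "T x (y+z) (y+z) x = 0" by (rule F0)
    hence "T x y z x + T x z y x = 0" using F0[of x y] F0[of x z] by (simp add: a2 a3)
    moreover have "T x z y x = T x y z x" using ps[of x z y x] s1[of y x x z] s2[of x y x z] by simp
    ultimately show ?thesis by simp
  qed
  have K: "T x y z w = - T w y z x" for x y z w
  proof -
    have "T (x+w) y z (x+w) = 0" by (rule G)
    thus ?thesis using G[of x y z] G[of w y z] by (simp add: a1 a4)
  qed
  have "T a b c d = T b c a d"
    using K[of a b c d] s2[of d b c a] K[of d b a c] s1[of c b a d] by simp
  moreover have "T b c a d = T c a b d"
    using K[of b c a d] s2[of d c a b] K[of d c b a] s1[of a c b d] by simp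
  ultimately show ?thesis using bi[of a b c d] by linarith
qed

theorem mainTheorem9:
  fixes J :: "'a::euclidean_space \<Rightarrow> 'a"
    and R :: "'a \<Rightarrow> 'a \<Rightarrow> 'a \<Rightarrow> 'a"
  assumes "kaehler_curvature J R"
  defines "A \<equiv> (\<forall>x1 x2 x3 x4 x y. RR R x1 x2 x3 x4 x y = 0)"
    and "B \<equiv> (\<forall>x u v. RR R u v v u x (J x) = 0)"
    and "C \<equiv> (\<forall>x y u. RR R u (J u) (J u) u x y = 0)"
    and "D \<equiv> (\<forall>x u. RR R u (J u) (J u) u x (J x) = 0)"
  shows "(A \<longleftrightarrow> B) \<and> (A \<longleftrightarrow> C) \<and> (A \<longleftrightarrow> D)"
proof -
  note kc = assms(1)[unfolded kaehler_curvature_def hermitian_structure_def]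
  have lJ: "linear J" using kc by blast
  have JJ0: "\<forall>x. J (J x) = - x" using kc by blast
  note JJ = JJ0[rule_format]
  have Ji0: "\<forall>x y. inner (J x) (J y) = inner x y" using kc by (elim conjE) assumption
  note Ji = Ji0[rule_format]
  have l10: "\<forall>y z. linear (\<lambda>x. R x y z)" using kc by blast
  note l1 = l10[rule_format]
  have l20: "\<forall>x z. linear (\<lambda>y. R x y z)" using kc by blast
  note l2 = l20[rule_format]
  have l30: "\<forall>x y. linear (\<lambda>z. R x y z)" using kc by blast
  note l3 = l30[rule_format]
  have sk0: "\<forall>x y z. R x y z = - R y x z" using kc by blast
  note sk = sk0[rule_format]
  have mt0: "\<forall>x y z w. inner (R x y z) w = - inner (R x y w) z" using kc by blast
  note mt = mt0[rule_format]
  have bi0: "\<forall>x y z. R x y z + R y z x + R z x y = 0" using kc by blast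
  note bi = bi0[rule_format]
  have RJ0: "\<forall>x y z. R x y (J z) = J (R x y z)" using kc by blast
  note RJ = RJ0[rule_format]
  have Ja: "\<And>a b. J (a+b) = J a + J b" using linear_add[OF lJ] by simp
  have Jn: "\<And>a. J (-a) = - J a" using linear_neg[OF lJ] by simp
  have Ra1: "\<And>a b y z. R (a+b) y z = R a y z + R b y z" using linear_add[OF l1] by simp
  have Ra2: "\<And>a b x z. R x (a+b) z = R x a z + R x b z" using linear_add[OF l2] by simp
  have Ra3: "\<And>a b x y. R x y (a+b) = R x y a + R x y b" using linear_add[OF l3] by simp
  have Rn1: "\<And>a y z. R (-a) y z = - R a y z" using linear_neg[OF l1] by simp
  have Rn2: "\<And>a x z. R x (-a) z = - R x a z" using linear_neg[OF l2] by simp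
  have Rn3: "\<And>a x y. R x y (-a) = - R x y a" using linear_neg[OF l3] by simp
  have ps: "\<And>a b c d. inner (R a b c) d = inner (R c d a) b"
  proof -
    fix a b c d
    show "inner (R a b c) d = inner (R c d a) b"
    proof (rule pairsym_gen[of "\<lambda>a b c d. inner (R a b c) d"])
      show "\<And>a b c d. inner (R b a c) d = - inner (R a b c) d" by (metis sk inner_minus_left)
      show "\<And>a b c d. inner (R a b d) c = - inner (R a b c) d" by (rule mt)
      show "\<And>a b c d. inner (R a b c) d + inner (R b c a) d + inner (R c a b) d = 0"
        using bi by (metis inner_add_left inner_zero_left)
    qed
  qed
  have RJJ: "R (J x) (J y) z = R x y z" for x y z
  proof -
    have "inner (R (J x) (J y) z - R x y z) w = 0" for w
    proof -
      have "inner (R (J x) (J y) z) w = inner (R z w (J x)) (J y)" by (rule ps)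
      also have "\<dots> = inner (R z w x) y" by (simp add: RJ Ji)
      also have "\<dots> = inner (R x y z) w" by (rule ps[symmetric])
      finally show ?thesis by (simp add: inner_diff_left)
    qed
    from this[of "R (J x) (J y) z - R x y z"] show ?thesis by simp
  qed
  have CA: "RR R a b c d x y = 0" if HC: "\<And>u. RR R u (J u) (J u) u x y = 0" for a b c d x y
  proof (rule kc_zero[of "\<lambda>a b c d. RR R a b c d x y" J])
    show "\<And>a b c d e. RR R (a + b) c d e x y = RR R a c d e x y + RR R b c d e x y"
      by (simp add: RR_def R4_def Ra1 Ra2 Ra3 inner_add_left inner_add_right)
    show "\<And>a b c d e. RR R c (a + b) d e x y = RR R c a d e x y + RR R c b d e x y"
      by (simp add: RR_def R4_def Ra1 Ra2 Ra3 inner_add_left inner_add_right)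
    show "\<And>a b c d e. RR R c d (a + b) e x y = RR R c d a e x y + RR R c d b e x y"
      by (simp add: RR_def R4_def Ra1 Ra2 Ra3 inner_add_left inner_add_right)
    show "\<And>a b c d e. RR R c d e (a + b) x y = RR R c d e a x y + RR R c d e b x y"
      by (simp add: RR_def R4_def Ra1 Ra2 Ra3 inner_add_left inner_add_right)
    show "\<And>a c d e. RR R (-a) c d e x y = - RR R a c d e x y"
      by (simp add: RR_def R4_def Rn1 Rn2 Rn3)
    show "\<And>a c d e. RR R c (-a) d e x y = - RR R c a d e x y"
      by (simp add: RR_def R4_def Rn1 Rn2 Rn3)
    show "\<And>a c d e. RR R c d (-a) e x y = - RR R c d a e x y"
      by (simp add: RR_def R4_def Rn1 Rn2 Rn3)
    show "\<And>a c d e. RR R c d e (-a) x y = - RR R c d e a x y"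
      by (simp add: RR_def R4_def Rn1 Rn2 Rn3)
    show "\<And>a b. J (a + b) = J a + J b" by (rule Ja)
    show "\<And>a. J (- a) = - J a" by (rule Jn)
    show "\<And>a. J (J a) = - a" by (rule JJ)
    show "\<And>a b c d. RR R b a c d x y = - RR R a b c d x y"
    proof -
      fix a b c d
      show "RR R b a c d x y = - RR R a b c d x y"
        unfolding RR_def R4_def
        using sk[of b "R x y a" c] sk[of "R x y b" a c] sk[of b a "R x y c"] sk[of b a c]
        by (simp add: inner_minus_left)
    qed
    show "\<And>a b c d. RR R a b d c x y = - RR R a b c d x y"
    proof -
      fix a b c d
      show "RR R a b d c x y = - RR R a b c d x y"
        unfolding RR_def R4_def
        using mt[of "R x y a" b d c] mt[of a "R x y b" d c] mt[of a b "R x y d" c] mt[of a b d "R x y c"]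
        by simp
    qed
    show "\<And>a b c d. RR R a b c d x y + RR R b c a d x y + RR R c a b d x y = 0"
    proof -
      fix a b c d
      have e1: "inner (R (R x y a) b c + R b c (R x y a) + R c (R x y a) b) d = 0" by (simp add: bi)
      have e2: "inner (R a (R x y b) c + R (R x y b) c a + R c a (R x y b)) d = 0" by (simp add: bi)
      have e3: "inner (R a b (R x y c) + R b (R x y c) a + R (R x y c) a b) d = 0" by (simp add: bi)
      have e4: "inner (R a b c + R b c a + R c a b) (R x y d) = 0" by (simp add: bi)
      show "RR R a b c d x y + RR R b c a d x y + RR R c a b d x y = 0"
        using e1 e2 e3 e4 unfolding RR_def R4_def inner_add_left by linarith
    qed
    show "\<And>a b c d. RR R a b (J c) (J d) x y = RR R a b c d x y"
      by (simp add: RR_def R4_def RJ Ji)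
    show "\<And>u. RR R u (J u) (J u) u x y = 0" by (rule HC)
  qed
  have DC: "RR R u (J u) (J u) u x y = 0" if HD: "\<And>x. RR R u (J u) (J u) u x (J x) = 0" for u x y
  proof -
    define Q where "Q x y = RR R u (J u) (J u) u x y" for x y
    have Qa1: "\<And>a b y. Q (a+b) y = Q a y + Q b y"
      by (simp add: Q_def RR_def R4_def Ra1 Ra2 Ra3 inner_add_left inner_add_right)
    have Qa2: "\<And>a b x. Q x (a+b) = Q x a + Q x b"
      by (simp add: Q_def RR_def R4_def Ra1 Ra2 Ra3 inner_add_left inner_add_right)
    have Qn2: "\<And>a x. Q x (-a) = - Q x a"
      by (simp add: Q_def RR_def R4_def Rn1 Rn2 Rn3)
    have Qs: "\<And>a b. Q b a = - Q a b"
    proof -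
      fix a b
      show "Q b a = - Q a b"
        unfolding Q_def RR_def R4_def
        using sk[of b a u] sk[of b a "J u"] by (simp add: inner_minus_left inner_minus_right Rn1 Rn2 Rn3)
    qed
    have QJ: "\<And>a b. Q (J a) (J b) = Q a b" by (simp add: Q_def RR_def RJJ)
    have Q0: "\<And>x. Q x (J x) = 0" using HD by (simp add: Q_def)
    have QJ2: "Q x (J w) = 0" for x w
    proof -
      have "Q (x+w) (J (x+w)) = 0" by (rule Q0)
      hence "Q x (J w) + Q w (J x) = 0" using Q0[of x] Q0[of w] by (simp add: Ja Qa1 Qa2)
      moreover have "Q w (J x) = Q x (J w)"
        using QJ[of w "J x"] Qs[of "J w" x] by (simp add: JJ Qn2)
      ultimately show ?thesis by simp
    qed
    have "Q x (J (J (-y))) = 0" by (rule QJ2)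
    thus ?thesis by (simp add: JJ Q_def)
  qed
  have DA: "D \<Longrightarrow> A"
  proof -
    assume d: D
    have "RR R u (J u) (J u) u x y = 0" for u x y
      by (rule DC) (use d in \<open>simp add: D_def\<close>)
    hence "RR R a b c e x y = 0" for a b c e x y by (rule CA)
    thus A unfolding A_def by blast
  qed
  have AB: "A \<Longrightarrow> B" unfolding A_def B_def by blast
  have AC: "A \<Longrightarrow> C" unfolding A_def C_def by blast
  have AD: "A \<Longrightarrow> D" unfolding A_def D_def by blast
  have BD: "B \<Longrightarrow> D" unfolding B_def D_def by blast
  have CD: "C \<Longrightarrow> D" unfolding C_def D_def by blast
  show ?thesis using DA AB AC AD BD CD by blast
qed

end
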